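(* Let $M$ be a model with borders, let $M^s$ be its submodel of separated points, and let $r:\mathcal U(M^s)\to\mathcal U(M)$ be the map \[ r(V)=\{x\in M \mid \forall y\ge x\ (y\in M^s \Rightarrow y\in V)\} \] (the upper adjoint of the restriction map $q:\mathcal U(M)\to\mathcal U(M^s)$, $q(W)=W\cap M^s$). Then $r$ preserves binary meets and Heyting implication, and for every $(\wedge,\to)$-formula $\varphi$ we have $v(\varphi)=r(v^s(\varphi))$; that is, for every $x\in M$, \[ M,x\models\varphi \iff \forall y\ge x\ \big(y\in M^s \Rightarrow M^s,y\models\varphi\big). \]
   Context: Fix $n\ge1$ and variables $p_1,\dots,p_n$; $2^n=\{0,1\}^n$ with componentwise order. A model is $(M,\le,c)$, $(M,\le)$ a poset, $c:M\to 2^n$ order-preserving, with intuitionistic Kripke semantics ($x\models p_i$ iff $c(x)_i=1$; $x\models\varphi\to\psi$ iff every $y\ge x$ satisfying $\varphi$ satisfies $\psi$; etc.). $\mathcal U(X)$ denotes the Heyting algebra of up-sets of a poset $X$. $v(\varphi)$ is the set of points of $M$ satisfying $\varphi$. A $(\wedge,\to)$-formula uses only $\wedge$ and $\to$. A point $x$ is a $q$-border point if $x\not\models q$ and all $y>x$ satisfy $q$; $x$ is separated if it is a $q$-border point for some variable $q$. $M^s$ is the set of separated points with the restricted order and colouring, regarded as a model in its own right (satisfaction in $M^s$ computed w.r.t. its own order); $v^s(\varphi)$ is the set of points of $M^s$ satisfying $\varphi$ in $M^s$. $M$ has borders if for every variable $p$ and every $x\in M$ with $x\not\models p$ there is a $p$-border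 point $y\ge x$. *)

theory Defs
  imports Main
begin

datatype form = Var nat | Bot | Conj form form | Disj form form | Impl form form

fun vars :: "form \<Rightarrow> nat set" where
  "vars (Var i) = {i}"
| "vars Bot = {}"
| "vars (Conj a b) = vars a \<union> vars b"
| "vars (Disj a b) = vars a \<union> vars b"
| "vars (Impl a b) = vars a \<union> vars b"

fun conj_impl :: "form \<Rightarrow> bool" where
  "conj_impl (Var i) = True"
| "conj_impl Bot = False"
| "conj_impl (Conj a b) = (conj_impl a \<and> conj_impl b)"
| "conj_impl (Disj a b) = False"
| "conj_impl (Impl a b) = (conj_impl a \<and> conj_impl b)"

definition poset :: "'a set \<Rightarrow> ('a \<Rightarrow> 'a \<Rightarrow> bool) \<Rightarrow> bool" where
  "poset M le \<longleftrightarrow> (\<forall>x\<in>M. le x x)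
     \<and> (\<forall>x\<in>M. \<forall>y\<in>M. \<forall>z\<in>M. le x y \<longrightarrow> le y z \<longrightarrow> le x z)
     \<and> (\<forall>x\<in>M. \<forall>y\<in>M. le x y \<longrightarrow> le y x \<longrightarrow> x = y)"

text \<open>A model (M, le, c) with n variables: c x i is the i-th bit of the colour of x (i < n);
  c is order preserving into 2^n with componentwise order.\<close>
definition model :: "nat \<Rightarrow> 'a set \<Rightarrow> ('a \<Rightarrow> 'a \<Rightarrow> bool) \<Rightarrow> ('a \<Rightarrow> nat \<Rightarrow> bool) \<Rightarrow> bool" where
  "model n M le c \<longleftrightarrow> poset M le
     \<and> (\<forall>x\<in>M. \<forall>y\<in>M. \<forall>i<n. le x y \<longrightarrow> c x i \<longrightarrow> c y i)"

fun sat :: "'a set \<Rightarrow> ('a \<Rightarrow> 'a \<Rightarrow> bool) \<Rightarrow> ('a \<Rightarrow> nat \<Rightarrow> bool) \<Rightarrow> 'a \<Rightarrow> form \<Rightarrow> bool" where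
  "sat M le c x (Var i) = c x i"
| "sat M le c x Bot = False"
| "sat M le c x (Conj a b) = (sat M le c x a \<and> sat M le c x b)"
| "sat M le c x (Disj a b) = (sat M le c x a \<or> sat M le c x b)"
| "sat M le c x (Impl a b) =
     (\<forall>y\<in>M. le x y \<longrightarrow> sat M le c y a \<longrightarrow> sat M le c y b)"

definition val :: "'a set \<Rightarrow> ('a \<Rightarrow> 'a \<Rightarrow> bool) \<Rightarrow> ('a \<Rightarrow> nat \<Rightarrow> bool) \<Rightarrow> form \<Rightarrow> 'a set" where
  "val M le c \<phi> = {x\<in>M. sat M le c x \<phi>}"

definition border_point :: "'a set \<Rightarrow> ('a \<Rightarrow> 'a \<Rightarrow> bool) \<Rightarrow> ('a \<Rightarrow> nat \<Rightarrow> bool) \<Rightarrow> nat \<Rightarrow> 'a \<Rightarrow> bool" where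
  "border_point M le c i x \<longleftrightarrow> x \<in> M \<and> \<not> c x i \<and> (\<forall>y\<in>M. le x y \<and> y \<noteq> x \<longrightarrow> c y i)"

definition separated_points :: "nat \<Rightarrow> 'a set \<Rightarrow> ('a \<Rightarrow> 'a \<Rightarrow> bool) \<Rightarrow> ('a \<Rightarrow> nat \<Rightarrow> bool) \<Rightarrow> 'a set" where
  "separated_points n M le c = {x\<in>M. \<exists>i<n. border_point M le c i x}"

definition has_borders :: "nat \<Rightarrow> 'a set \<Rightarrow> ('a \<Rightarrow> 'a \<Rightarrow> bool) \<Rightarrow> ('a \<Rightarrow> nat \<Rightarrow> bool) \<Rightarrow> bool" where
  "has_borders n M le c \<longleftrightarrow>
     (\<forall>i<n. \<forall>x\<in>M. \<not> c x i \<longrightarrow> (\<exists>y\<in>M. le x y \<and> border_point M le c i y))"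

definition upsets :: "'a set \<Rightarrow> ('a \<Rightarrow> 'a \<Rightarrow> bool) \<Rightarrow> 'a set set" where
  "upsets M le = {V. V \<subseteq> M \<and> (\<forall>x\<in>V. \<forall>y\<in>M. le x y \<longrightarrow> y \<in> V)}"

definition heyting_imp :: "'a set \<Rightarrow> ('a \<Rightarrow> 'a \<Rightarrow> bool) \<Rightarrow> 'a set \<Rightarrow> 'a set \<Rightarrow> 'a set" where
  "heyting_imp M le V W = {x\<in>M. \<forall>y\<in>M. le x y \<longrightarrow> y \<in> V \<longrightarrow> y \<in> W}"

definition rmap :: "'a set \<Rightarrow> ('a \<Rightarrow> 'a \<Rightarrow> bool) \<Rightarrow> 'a set \<Rightarrow> 'a set \<Rightarrow> 'a set" where
  "rmap M le Ms V = {x\<in>M. \<forall>y\<in>M. le x y \<longrightarrow> y \<in> Ms \<longrightarrow> y \<in> V}"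

end

theory Submission
  imports Defs
begin

lemma persist:
  assumes refl: "\<forall>x\<in>S. le x x" and tr: "\<forall>x\<in>S. \<forall>y\<in>S. \<forall>z\<in>S. le x y \<longrightarrow> le y z \<longrightarrow> le x z"
    and mono: "\<forall>x\<in>S. \<forall>y\<in>S. \<forall>i<n. le x y \<longrightarrow> c x i \<longrightarrow> c y i"
  shows "vars \<phi> \<subseteq> {..<n} \<Longrightarrow> x \<in> S \<Longrightarrow> y \<in> S \<Longrightarrow> le x y \<Longrightarrow> sat S le c x \<phi> \<Longrightarrow> sat S le c y \<phi>"
proof (induction \<phi> arbitrary: x y)
  case (Impl a b)
  then show ?case using tr by (metis sat.simps(5))
qed (use mono in auto)

lemma key:
  assumes P: "poset M le" and mono: "\<forall>x\<in>M. \<forall>y\<in>M. \<forall>i<n. le x y \<longrightarrow> c x i \<longrightarrow> c y i"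
    and hb: "has_borders n M le c"
    and Ms: "Ms = separated_points n M le c"
  shows "conj_impl \<phi> \<Longrightarrow> vars \<phi> \<subseteq> {..<n} \<Longrightarrow> \<forall>x\<in>M. sat M le c x \<phi> \<longleftrightarrow>
                (\<forall>y\<in>M. le x y \<longrightarrow> y \<in> Ms \<longrightarrow> sat Ms le c y \<phi>)"
proof -
  have sub: "Ms \<subseteq> M" unfolding Ms separated_points_def by blast
  have refl: "\<forall>x\<in>M. le x x" and tr: "\<forall>x\<in>M. \<forall>y\<in>M. \<forall>z\<in>M. le x y \<longrightarrow> le y z \<longrightarrow> le x z"
    using P unfolding poset_def by blast+
  show "conj_impl \<phi> \<Longrightarrow> vars \<phi> \<subseteq> {..<n} \<Longrightarrow> \<forall>x\<in>M. sat M le c x \<phi> \<longleftrightarrow>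
                (\<forall>y\<in>M. le x y \<longrightarrow> y \<in> Ms \<longrightarrow> sat Ms le c y \<phi>)"
  proof (induction \<phi>)
  case (Var i)
  then have i: "i < n" by simp
  show ?case
  proof (intro ballI iffI allI impI)
    fix x y assume xy: "x \<in> M" "sat M le c x (Var i)" "y \<in> M" "le x y" "y \<in> Ms"
    have "c x i" using xy(2) by simp
    then have "c y i" using mono i xy(1,3,4) by blast
    then show "sat Ms le c y (Var i)" by simp
  next
    fix x assume x: "x \<in> M" and h: "\<forall>y\<in>M. le x y \<longrightarrow> y \<in> Ms \<longrightarrow> sat Ms le c y (Var i)"
    show "sat M le c x (Var i)"
    proof (rule ccontr)
      assume "\<not> sat M le c x (Var i)"
      then have "\<not> c x i" by simp
      then obtain y where y: "y \<in> M" "le x y" "border_point M le c i y"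
        using hb i x unfolding has_borders_def by blast
      then have "y \<in> Ms" using Ms i y(1) unfolding separated_points_def by blast
      then have "sat Ms le c y (Var i)" using h y by blast
      then show False using y(3) by (simp add: border_point_def)
    qed
  qed
  next
  case Bot then show ?case by simp
  next
  case (Conj a b)
  then have "\<forall>x\<in>M. sat M le c x a \<longleftrightarrow> (\<forall>y\<in>M. le x y \<longrightarrow> y \<in> Ms \<longrightarrow> sat Ms le c y a)"
    and "\<forall>x\<in>M. sat M le c x b \<longleftrightarrow> (\<forall>y\<in>M. le x y \<longrightarrow> y \<in> Ms \<longrightarrow> sat Ms le c y b)"
    by simp_all
  then show ?case by (simp only: sat.simps) blast
  next
  case (Disj a b) then show ?case by simp
  next
  case (Impl a b)
  then have IHa: "\<forall>x\<in>M. sat M le c x a \<longleftrightarrow> (\<forall>y\<in>M. le x y \<longrightarrow> y \<in> Ms \<longrightarrow> sat Ms le c y a)"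
    and IHb: "\<forall>x\<in>M. sat M le c x b \<longleftrightarrow> (\<forall>y\<in>M. le x y \<longrightarrow> y \<in> Ms \<longrightarrow> sat Ms le c y b)"
    and va: "vars a \<subseteq> {..<n}" by auto
  have pa: "\<And>z w. z \<in> Ms \<Longrightarrow> w \<in> Ms \<Longrightarrow> le z w \<Longrightarrow> sat Ms le c z a \<Longrightarrow> sat Ms le c w a"
  proof -
    fix z w assume "z \<in> Ms" "w \<in> Ms" "le z w" "sat Ms le c z a"
    moreover have "\<forall>x\<in>Ms. le x x" "\<forall>x\<in>Ms. \<forall>y\<in>Ms. \<forall>z\<in>Ms. le x y \<longrightarrow> le y z \<longrightarrow> le x z"
      "\<forall>x\<in>Ms. \<forall>y\<in>Ms. \<forall>i<n. le x y \<longrightarrow> c x i \<longrightarrow> c y i"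
      using refl tr mono sub by blast+
    ultimately show "sat Ms le c w a" using persist[of Ms le n c a z w] va by blast
  qed
  show ?case
  proof (intro ballI iffI allI impI)
    fix x y assume x: "x \<in> M" and h: "sat M le c x (Impl a b)" and y: "y \<in> M" "le x y" "y \<in> Ms"
    show "sat Ms le c y (Impl a b)"
      unfolding sat.simps
    proof (intro ballI impI)
      fix z assume z: "z \<in> Ms" "le y z" "sat Ms le c z a"
      have zM: "z \<in> M" using z sub by auto
      have xz: "le x z" using tr x y zM z by blast
      have "sat M le c z a" unfolding IHa[rule_format, OF zM]
        using pa z by blast
      then have "sat M le c z b" using h zM xz by simp
      then show "sat Ms le c z b" using IHb zM z refl by blast
    qed
  next
    fix x assume x: "x \<in> M" and h: "\<forall>y\<in>M. le x y \<longrightarrow> y \<in> Ms \<longrightarrow> sat Ms le c y (Impl a b)"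
    show "sat M le c x (Impl a b)"
      unfolding sat.simps
    proof (intro ballI impI)
      fix y assume y: "y \<in> M" "le x y" "sat M le c y a"
      show "sat M le c y b" unfolding IHb[rule_format, OF y(1)]
      proof (intro ballI impI)
        fix w assume w: "w \<in> M" "le y w" "w \<in> Ms"
        have "sat Ms le c w a" using IHa y w by blast
        moreover have "le x w" using tr x y w by blast
        ultimately have "sat Ms le c w (Impl a b)" using h w by blast
        then show "sat Ms le c w b" using \<open>sat Ms le c w a\<close> w refl sub by auto
      qed
    qed
  qed
  qed
qed

theorem lemma3p10:
  fixes n :: nat and M :: "'a set" and le :: "'a \<Rightarrow> 'a \<Rightarrow> bool" and c :: "'a \<Rightarrow> nat \<Rightarrow> bool"
  assumes "n \<ge> 1"
    and "model n M le c"
    and "has_borders n M le c"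
  defines "Ms \<equiv> separated_points n M le c"
  shows "(\<forall>V\<in>upsets Ms le. rmap M le Ms V \<in> upsets M le)
    \<and> (\<forall>V\<in>upsets Ms le. \<forall>W\<in>upsets Ms le.
          rmap M le Ms (V \<inter> W) = rmap M le Ms V \<inter> rmap M le Ms W)
    \<and> (\<forall>V\<in>upsets Ms le. \<forall>W\<in>upsets Ms le.
          rmap M le Ms (heyting_imp Ms le V W)
            = heyting_imp M le (rmap M le Ms V) (rmap M le Ms W))
    \<and> (\<forall>\<phi>. conj_impl \<phi> \<and> vars \<phi> \<subseteq> {..<n} \<longrightarrow>
          val M le c \<phi> = rmap M le Ms (val Ms le c \<phi>)
          \<and> (\<forall>x\<in>M. sat M le c x \<phi> \<longleftrightarrow>
                (\<forall>y\<in>M. le x y \<longrightarrow> y \<in> Ms \<longrightarrow> sat Ms le c y \<phi>)))"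
proof -
  have P: "poset M le" and mono: "\<forall>x\<in>M. \<forall>y\<in>M. \<forall>i<n. le x y \<longrightarrow> c x i \<longrightarrow> c y i"
    using assms(2) by (auto simp: model_def)
  have sub: "Ms \<subseteq> M" unfolding Ms_def separated_points_def by blast
  have refl: "\<forall>x\<in>M. le x x" and tr: "\<forall>x\<in>M. \<forall>y\<in>M. \<forall>z\<in>M. le x y \<longrightarrow> le y z \<longrightarrow> le x z"
    using P unfolding poset_def by blast+
  have A: "\<forall>V\<in>upsets Ms le. rmap M le Ms V \<in> upsets M le"
  proof
    fix V
    show "rmap M le Ms V \<in> upsets M le" unfolding upsets_def mem_Collect_eq
    proof (intro conjI ballI impI)
      show "rmap M le Ms V \<subseteq> M" unfolding rmap_def by blast
    next
      fix x y assume x: "x \<in> rmap M le Ms V" and y: "y \<in> M" "le x y"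
      have xM: "x \<in> M" and H: "\<forall>z\<in>M. le x z \<longrightarrow> z \<in> Ms \<longrightarrow> z \<in> V"
        using x unfolding rmap_def by blast+
      show "y \<in> rmap M le Ms V" unfolding rmap_def mem_Collect_eq
      proof (intro conjI ballI impI y(1))
        fix z assume z: "z \<in> M" "le y z" "z \<in> Ms"
        have "le x z" using tr xM y z by blast
        then show "z \<in> V" using H z by blast
      qed
    qed
  qed
  have B: "\<forall>V\<in>upsets Ms le. \<forall>W\<in>upsets Ms le.
          rmap M le Ms (V \<inter> W) = rmap M le Ms V \<inter> rmap M le Ms W"
  proof (intro ballI)
    fix V W
    show "rmap M le Ms (V \<inter> W) = rmap M le Ms V \<inter> rmap M le Ms W"
      unfolding rmap_def by blast
  qed
  have C: "\<forall>V\<in>upsets Ms le. \<forall>W\<in>upsets Ms le.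
          rmap M le Ms (heyting_imp Ms le V W)
            = heyting_imp M le (rmap M le Ms V) (rmap M le Ms W)"
  proof (intro ballI)
    fix V W assume V: "V \<in> upsets Ms le" and W: "W \<in> upsets Ms le"
    show "rmap M le Ms (heyting_imp Ms le V W) = heyting_imp M le (rmap M le Ms V) (rmap M le Ms W)"
    proof (rule set_eqI, rule iffI)
      fix x assume h: "x \<in> rmap M le Ms (heyting_imp Ms le V W)"
      have xM: "x \<in> M" and H: "\<forall>z\<in>M. le x z \<longrightarrow> z \<in> Ms \<longrightarrow> (\<forall>w\<in>Ms. le z w \<longrightarrow> w \<in> V \<longrightarrow> w \<in> W)"
        using h unfolding rmap_def heyting_imp_def by blast+
      show "x \<in> heyting_imp M le (rmap M le Ms V) (rmap M le Ms W)"
        unfolding heyting_imp_def mem_Collect_eq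
      proof (intro conjI ballI impI xM)
        fix y assume y: "y \<in> M" "le x y" "y \<in> rmap M le Ms V"
        show "y \<in> rmap M le Ms W" unfolding rmap_def mem_Collect_eq
        proof (intro conjI ballI impI y(1))
          fix z assume z: "z \<in> M" "le y z" "z \<in> Ms"
          have "z \<in> V" using y(3) z unfolding rmap_def by blast
          moreover have "le x z" using tr xM y z by blast
          ultimately show "z \<in> W" using H z refl by blast
        qed
      qed
    next
      fix x assume h: "x \<in> heyting_imp M le (rmap M le Ms V) (rmap M le Ms W)"
      show "x \<in> rmap M le Ms (heyting_imp Ms le V W)"
        unfolding rmap_def heyting_imp_def
      proof (intro CollectI conjI ballI impI)
        show "x \<in> M" using h unfolding heyting_imp_def by blast
      next
        fix y z assume y: "y \<in> M" "le x y" "y \<in> Ms" and z: "z \<in> Ms" "le y z" "z \<in> V"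
        have xM: "x \<in> M" and H: "\<forall>u\<in>M. le x u \<longrightarrow> u \<in> rmap M le Ms V \<longrightarrow> u \<in> rmap M le Ms W"
          using h unfolding heyting_imp_def by blast+
        have zM: "z \<in> M" using z sub by blast
        have xz: "le x z" using tr xM y zM z by blast
        have Vu: "\<forall>u\<in>V. \<forall>w\<in>Ms. le u w \<longrightarrow> w \<in> V" using V unfolding upsets_def by blast
        have "z \<in> rmap M le Ms V" unfolding rmap_def mem_Collect_eq
        proof (intro conjI ballI impI zM)
          fix w assume "w \<in> M" "le z w" "w \<in> Ms"
          then show "w \<in> V" using Vu z by blast
        qed
        then have "z \<in> rmap M le Ms W" using H zM xz by blast
        then show "z \<in> W" using zM z refl unfolding rmap_def by blast
      qed
    qed
  qed
  have D: "\<forall>\<phi>. conj_impl \<phi> \<and> vars \<phi> \<subseteq> {..<n} \<longrightarrow>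
          val M le c \<phi> = rmap M le Ms (val Ms le c \<phi>)
          \<and> (\<forall>x\<in>M. sat M le c x \<phi> \<longleftrightarrow>
                (\<forall>y\<in>M. le x y \<longrightarrow> y \<in> Ms \<longrightarrow> sat Ms le c y \<phi>))"
  proof (intro allI impI)
    fix \<phi> assume "conj_impl \<phi> \<and> vars \<phi> \<subseteq> {..<n}"
    then have K: "\<forall>x\<in>M. sat M le c x \<phi> \<longleftrightarrow> (\<forall>y\<in>M. le x y \<longrightarrow> y \<in> Ms \<longrightarrow> sat Ms le c y \<phi>)"
      using key[OF P mono assms(3) meta_eq_to_obj_eq[OF Ms_def]] by blast
    then show "val M le c \<phi> = rmap M le Ms (val Ms le c \<phi>)
          \<and> (\<forall>x\<in>M. sat M le c x \<phi> \<longleftrightarrow> (\<forall>y\<in>M. le x y \<longrightarrow> y \<in> Ms \<longrightarrow> sat Ms le c y \<phi>))"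
      unfolding val_def rmap_def by blast
  qed
  show ?thesis using A B C D by (intro conjI)
qed

end
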